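(* Let $(G,\cdot)$ be a group and let $\psi\in\operatorname{End}(G,\cdot)$. Consider the subset $$N=\{\,\nu(g) : g\in G\,\},\qquad \nu(g)\colon h\mapsto g\cdot\psi(g)^{-1}\cdot h\cdot\psi(g),$$ of $\operatorname{Perm}(G)$. The following are equivalent: (a) $N$ is a subgroup of $\operatorname{Perm}(G)$; (b) $N$ is normalised by $\lambda(G)$; (c) $N$ is a regular subgroup of $\operatorname{Perm}(G)$ which normalises, and is normalised by, $\lambda(G)$; (d) $\psi([[G,\psi],G])\le Z(G,\cdot)$; (e) $(G,\cdot,\circ)$ is a bi-skew brace, where $g\circ h=g\cdot\psi(g)^{-1}\cdot h\cdot\psi(g)$ for all $g,h\in G$.
   Context: $\operatorname{Perm}(G)$ denotes the group of all permutations of the underlying set of $G$, and $\lambda\colon G\to\operatorname{Perm}(G)$, $\lambda(g)(h)=g\cdot h$, is the left regular representation. A subset $N\subseteq\operatorname{Perm}(G)$ is regular if the map $N\to G$, $\eta\mapsto\eta(1)$, is a bijection. "$N$ normalises $\lambda(G)$" means $\eta\lambda(G)\eta^{-1}=\lambda(G)$ for all $\eta\in N$; "$N$ is normalised by $\lambda(G)$" means $\lambda(g)N\lambda(g)^{-1}=N$ for all $g\in G$. For $\psi\in\operatorname{End}(G,\cdot)$ and $g\in G$, write $[g,\psi]=g\cdot\psi(g)^{-1}$, and $[G,\psi]$ for the subgroup generated by all $[g,\psi]$, $g\in G$. Commutators are $[x,y]=xyx^{-1}y^{-1}$, and for subgroups $A,B$, $[A,B]$ is the subgroup generated by all $[a,b]$,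 $a\in A,b\in B$. $Z(G,\cdot)$ is the centre. A skew (left) brace is a triple $(G,\cdot,\circ)$ where $(G,\cdot)$ and $(G,\circ)$ are groups and $g\circ(h\cdot k)=(g\circ h)\cdot g^{-1}\cdot(g\circ k)$ for all $g,h,k$ (with $g^{-1}$ the inverse in $(G,\cdot)$). A bi-skew brace is a triple $(G,\cdot,\circ)$ such that both $(G,\cdot,\circ)$ and $(G,\circ,\cdot)$ are skew braces. *)

theory Defs
  imports "HOL-Algebra.Algebra"
begin

definition centre :: "('a, 'b) monoid_scheme \<Rightarrow> 'a set" where
  "centre G = {z \<in> carrier G. \<forall>x \<in> carrier G. z \<otimes>\<^bsub>G\<^esub> x = x \<otimes>\<^bsub>G\<^esub> z}"

definition comm_subgroup :: "('a, 'b) monoid_scheme \<Rightarrow> 'a set \<Rightarrow> 'a set \<Rightarrow> 'a set" where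
  "comm_subgroup G A B = generate G
     {a \<otimes>\<^bsub>G\<^esub> b \<otimes>\<^bsub>G\<^esub> inv\<^bsub>G\<^esub> a \<otimes>\<^bsub>G\<^esub> inv\<^bsub>G\<^esub> b | a b. a \<in> A \<and> b \<in> B}"

definition psi_comm :: "('a, 'b) monoid_scheme \<Rightarrow> ('a \<Rightarrow> 'a) \<Rightarrow> 'a set" where
  "psi_comm G \<psi> = generate G {g \<otimes>\<^bsub>G\<^esub> inv\<^bsub>G\<^esub> (\<psi> g) | g. g \<in> carrier G}"

text \<open>Left regular representation, as an element of Perm(G) = BijGroup (carrier G).\<close>
definition lreg :: "('a, 'b) monoid_scheme \<Rightarrow> 'a \<Rightarrow> ('a \<Rightarrow> 'a)" where
  "lreg G g = (\<lambda>h \<in> carrier G. g \<otimes>\<^bsub>G\<^esub> h)"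

definition nu :: "('a, 'b) monoid_scheme \<Rightarrow> ('a \<Rightarrow> 'a) \<Rightarrow> 'a \<Rightarrow> ('a \<Rightarrow> 'a)" where
  "nu G \<psi> g = (\<lambda>h \<in> carrier G. g \<otimes>\<^bsub>G\<^esub> inv\<^bsub>G\<^esub> (\<psi> g) \<otimes>\<^bsub>G\<^esub> h \<otimes>\<^bsub>G\<^esub> \<psi> g)"

definition regular_perm :: "('a, 'b) monoid_scheme \<Rightarrow> ('a \<Rightarrow> 'a) set \<Rightarrow> bool" where
  "regular_perm G N \<longleftrightarrow> bij_betw (\<lambda>\<eta>. \<eta> \<one>\<^bsub>G\<^esub>) N (carrier G)"

definition normalises_lreg :: "('a, 'b) monoid_scheme \<Rightarrow> ('a \<Rightarrow> 'a) set \<Rightarrow> bool" where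
  "normalises_lreg G N \<longleftrightarrow>
     (\<forall>\<eta> \<in> N. (\<lambda>x. \<eta> \<otimes>\<^bsub>BijGroup (carrier G)\<^esub> x \<otimes>\<^bsub>BijGroup (carrier G)\<^esub> inv\<^bsub>BijGroup (carrier G)\<^esub> \<eta>)
                 ` (lreg G ` carrier G) = lreg G ` carrier G)"

definition normalised_by_lreg :: "('a, 'b) monoid_scheme \<Rightarrow> ('a \<Rightarrow> 'a) set \<Rightarrow> bool" where
  "normalised_by_lreg G N \<longleftrightarrow>
     (\<forall>g \<in> carrier G. (\<lambda>x. lreg G g \<otimes>\<^bsub>BijGroup (carrier G)\<^esub> x \<otimes>\<^bsub>BijGroup (carrier G)\<^esub> inv\<^bsub>BijGroup (carrier G)\<^esub> (lreg G g))
                 ` N = N)"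

definition skew_brace :: "'a monoid \<Rightarrow> 'a monoid \<Rightarrow> bool" where
  "skew_brace A B \<longleftrightarrow> group A \<and> group B \<and> carrier A = carrier B \<and>
     (\<forall>g \<in> carrier A. \<forall>h \<in> carrier A. \<forall>k \<in> carrier A.
        g \<otimes>\<^bsub>B\<^esub> (h \<otimes>\<^bsub>A\<^esub> k) = (g \<otimes>\<^bsub>B\<^esub> h) \<otimes>\<^bsub>A\<^esub> inv\<^bsub>A\<^esub> g \<otimes>\<^bsub>A\<^esub> (g \<otimes>\<^bsub>B\<^esub> k))"

definition bi_skew_brace :: "'a monoid \<Rightarrow> 'a monoid \<Rightarrow> bool" where
  "bi_skew_brace A B \<longleftrightarrow> skew_brace A B \<and> skew_brace B A"

definition circ_struct :: "'a monoid \<Rightarrow> ('a \<Rightarrow> 'a) \<Rightarrow> 'a \<Rightarrow> 'a monoid" where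
  "circ_struct G \<psi> e = \<lparr>carrier = carrier G,
     monoid.mult = (\<lambda>g h. g \<otimes>\<^bsub>G\<^esub> inv\<^bsub>G\<^esub> (\<psi> g) \<otimes>\<^bsub>G\<^esub> h \<otimes>\<^bsub>G\<^esub> \<psi> g), monoid.one = e\<rparr>"

end

theory Submission
  imports Defs
begin

locale psig = group G for G :: "'a monoid" (structure) +
  fixes psi :: "'a \<Rightarrow> 'a"
  assumes hom: "psi \<in> hom G G"
begin

sublocale gh: group_hom G G psi
  by (simp add: group_hom_def group_hom_axioms_def hom is_group)

lemma psi_closed[simp]: "x \<in> carrier G \<Longrightarrow> psi x \<in> carrier G"
  using hom by (auto simp: hom_def)
lemma psi_mult[simp]: "x \<in> carrier G \<Longrightarrow> y \<in> carrier G \<Longrightarrow> psi (x \<otimes> y) = psi x \<otimes> psi y"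
  using hom by (auto simp: hom_def)
lemma psi_one[simp]: "psi \<one> = \<one>" by (rule gh.hom_one)
lemma psi_inv[simp]: "x \<in> carrier G \<Longrightarrow> psi (inv x) = inv (psi x)" by simp

lemma canc1[simp]: "x \<in> carrier G \<Longrightarrow> y \<in> carrier G \<Longrightarrow> x \<otimes> (inv x \<otimes> y) = y"
  by (simp add: m_assoc[symmetric])
lemma canc2[simp]: "x \<in> carrier G \<Longrightarrow> y \<in> carrier G \<Longrightarrow> inv x \<otimes> (x \<otimes> y) = y"
  by (simp add: m_assoc[symmetric])

definition circ where "circ g h = g \<otimes> inv (psi g) \<otimes> h \<otimes> psi g"
definition gam where "gam g x = inv (psi g) \<otimes> x \<otimes> psi g"
definition comm where "comm x y = x \<otimes> y \<otimes> inv x \<otimes> inv y"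
definition QQ where "QQ \<longleftrightarrow> (\<forall>g\<in>carrier G. \<forall>h\<in>carrier G.
   comm (psi (g \<otimes> inv (psi g))) (psi h) \<in> centre G)"

lemma circ_closed[simp]: "g \<in> carrier G \<Longrightarrow> h \<in> carrier G \<Longrightarrow> circ g h \<in> carrier G"
  by (simp add: circ_def)
lemma gam_closed[simp]: "g \<in> carrier G \<Longrightarrow> h \<in> carrier G \<Longrightarrow> gam g h \<in> carrier G"
  by (simp add: gam_def)
lemma comm_closed[simp]: "g \<in> carrier G \<Longrightarrow> h \<in> carrier G \<Longrightarrow> comm g h \<in> carrier G"
  by (simp add: comm_def)
lemma circ_gam: "g \<in> carrier G \<Longrightarrow> h \<in> carrier G \<Longrightarrow> circ g h = g \<otimes> gam g h"
  by (simp add: circ_def gam_def m_assoc)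

lemma centre_iff: "z \<in> centre G \<longleftrightarrow> z \<in> carrier G \<and> (\<forall>x\<in>carrier G. z \<otimes> x = x \<otimes> z)"
  by (simp add: centre_def)

lemma centre_inv: assumes "z \<in> centre G" shows "inv z \<in> centre G"
proof -
  have z: "z \<in> carrier G" and c: "\<And>x. x \<in> carrier G \<Longrightarrow> z \<otimes> x = x \<otimes> z"
    using assms by (auto simp: centre_iff)
  have "inv z \<otimes> x = x \<otimes> inv z" if x: "x \<in> carrier G" for x
  proof -
    have "inv z \<otimes> x = inv z \<otimes> (x \<otimes> z) \<otimes> inv z" using z x by (simp add: m_assoc)
    also have "\<dots> = inv z \<otimes> (z \<otimes> x) \<otimes> inv z" using c x by simp
    also have "\<dots> = x \<otimes> inv z" using z x by (simp add: m_assoc)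
    finally show ?thesis .
  qed
  then show ?thesis using z by (simp add: centre_iff)
qed
lemma centre_mult: assumes "z \<in> centre G" "w \<in> centre G" shows "z \<otimes> w \<in> centre G"
proof -
  have z: "z \<in> carrier G" and c: "\<And>x. x \<in> carrier G \<Longrightarrow> z \<otimes> x = x \<otimes> z"
    using assms by (auto simp: centre_iff)
  have w: "w \<in> carrier G" and d: "\<And>x. x \<in> carrier G \<Longrightarrow> w \<otimes> x = x \<otimes> w"
    using assms by (auto simp: centre_iff)
  have "z \<otimes> w \<otimes> x = x \<otimes> (z \<otimes> w)" if x: "x \<in> carrier G" for x
  proof -
    have "z \<otimes> w \<otimes> x = z \<otimes> (x \<otimes> w)" using z w x d by (simp add: m_assoc)
    also have "\<dots> = (z \<otimes> x) \<otimes> w" using z w x by (simp add: m_assoc)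
    also have "\<dots> = (x \<otimes> z) \<otimes> w" using x c by simp
    also have "\<dots> = x \<otimes> (z \<otimes> w)" using z w x by (simp add: m_assoc)
    finally show ?thesis .
  qed
  then show ?thesis using z w by (simp add: centre_iff)
qed
lemma centre_one: "\<one> \<in> centre G" by (simp add: centre_iff)

lemma cancel_both:
  assumes "u \<in> carrier G" "v \<in> carrier G" "b \<in> carrier G" "c \<in> carrier G"
  shows "u = v \<longleftrightarrow> b \<otimes> u \<otimes> c = b \<otimes> v \<otimes> c"
proof
  assume "b \<otimes> u \<otimes> c = b \<otimes> v \<otimes> c"
  moreover have "u = inv b \<otimes> (b \<otimes> u \<otimes> c) \<otimes> inv c" using assms by (simp add: m_assoc)
  moreover have "v = inv b \<otimes> (b \<otimes> v \<otimes> c) \<otimes> inv c" using assms by (simp add: m_assoc)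
  ultimately show "u = v" by simp
qed simp

lemma conj_iff:
  assumes a: "a \<in> carrier G" and b: "b \<in> carrier G"
  shows "(\<forall>x\<in>carrier G. inv a \<otimes> x \<otimes> a = inv b \<otimes> x \<otimes> b) \<longleftrightarrow> b \<otimes> inv a \<in> centre G"
proof -
  have "inv a \<otimes> x \<otimes> a = inv b \<otimes> x \<otimes> b \<longleftrightarrow> b \<otimes> inv a \<otimes> x = x \<otimes> (b \<otimes> inv a)"
    if x: "x \<in> carrier G" for x
  proof -
    have "inv a \<otimes> x \<otimes> a = inv b \<otimes> x \<otimes> b \<longleftrightarrow>
       b \<otimes> (inv a \<otimes> x \<otimes> a) \<otimes> inv a = b \<otimes> (inv b \<otimes> x \<otimes> b) \<otimes> inv a"
      using a b x by (intro cancel_both) auto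
    moreover have "b \<otimes> (inv a \<otimes> x \<otimes> a) \<otimes> inv a = b \<otimes> inv a \<otimes> x"
      using a b x by (simp add: m_assoc)
    moreover have "b \<otimes> (inv b \<otimes> x \<otimes> b) \<otimes> inv a = x \<otimes> (b \<otimes> inv a)"
      using a b x by (simp add: m_assoc)
    ultimately show ?thesis by simp
  qed
  then show ?thesis using a b by (auto simp: centre_iff)
qed

lemma inv_inv'[simp]: "x \<in> carrier G \<Longrightarrow> inv (inv x) = x" by simp

lemma gam_mult: "g \<in> carrier G \<Longrightarrow> x \<in> carrier G \<Longrightarrow> y \<in> carrier G \<Longrightarrow>
   gam g (x \<otimes> y) = gam g x \<otimes> gam g y"
  by (simp add: gam_def m_assoc)

lemma comm_inv: "x \<in> carrier G \<Longrightarrow> y \<in> carrier G \<Longrightarrow> inv (comm x y) = comm y x"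
  by (simp add: comm_def inv_mult_group m_assoc)

lemma comm_centre_sym: "x \<in> carrier G \<Longrightarrow> y \<in> carrier G \<Longrightarrow> comm x y \<in> centre G \<longleftrightarrow> comm y x \<in> centre G"
  by (metis comm_inv centre_inv)

lemma gam_hom_iff:
  assumes g: "g \<in> carrier G" and h: "h \<in> carrier G"
  shows "(\<forall>x\<in>carrier G. gam (circ g h) x = gam g (gam h x)) \<longleftrightarrow>
         comm (psi (g \<otimes> inv (psi g))) (psi h) \<in> centre G"
proof -
  have "(\<forall>x\<in>carrier G. gam (circ g h) x = gam g (gam h x)) \<longleftrightarrow>
        (\<forall>x\<in>carrier G. inv (psi (circ g h)) \<otimes> x \<otimes> psi (circ g h) =
             inv (psi h \<otimes> psi g) \<otimes> x \<otimes> (psi h \<otimes> psi g))"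
    using g h by (simp add: gam_def inv_mult_group m_assoc)
  also have "\<dots> \<longleftrightarrow> (psi h \<otimes> psi g) \<otimes> inv (psi (circ g h)) \<in> centre G"
    using g h by (intro conj_iff) auto
  also have "(psi h \<otimes> psi g) \<otimes> inv (psi (circ g h)) = comm (psi h) (psi (g \<otimes> inv (psi g)))"
    using g h by (simp add: circ_def comm_def inv_mult_group m_assoc)
  finally show ?thesis using g h comm_centre_sym by simp
qed

lemma circ_assoc_iff:
  assumes g: "g \<in> carrier G" and h: "h \<in> carrier G" and x: "x \<in> carrier G"
  shows "circ (circ g h) x = circ g (circ h x) \<longleftrightarrow> gam (circ g h) x = gam g (gam h x)"
proof -
  have "circ g (circ h x) = circ g h \<otimes> gam g (gam h x)"
    using g h x by (simp add: circ_gam gam_mult m_assoc)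
  moreover have "circ (circ g h) x = circ g h \<otimes> gam (circ g h) x"
    using g h x by (simp add: circ_gam)
  ultimately show ?thesis using g h x by (metis cancel_both one_closed gam_closed circ_closed r_one)
qed

lemma assoc_iff_QQ:
  "(\<forall>g\<in>carrier G. \<forall>h\<in>carrier G. \<forall>x\<in>carrier G. circ (circ g h) x = circ g (circ h x)) \<longleftrightarrow> QQ"
  unfolding QQ_def using circ_assoc_iff gam_hom_iff by simp

lemma gam_hom_QQ: "QQ \<Longrightarrow> g \<in> carrier G \<Longrightarrow> h \<in> carrier G \<Longrightarrow> x \<in> carrier G \<Longrightarrow>
   gam (circ g h) x = gam g (gam h x)"
  unfolding QQ_def using gam_hom_iff by blast

lemma circ_assoc_QQ: "QQ \<Longrightarrow> g \<in> carrier G \<Longrightarrow> h \<in> carrier G \<Longrightarrow> x \<in> carrier G \<Longrightarrow>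
   circ (circ g h) x = circ g (circ h x)"
  using assoc_iff_QQ by blast


lemma comm_mult_left: "x \<in> carrier G \<Longrightarrow> y \<in> carrier G \<Longrightarrow> u \<in> carrier G \<Longrightarrow>
  comm (x \<otimes> y) u = x \<otimes> comm y u \<otimes> inv x \<otimes> comm x u"
  by (simp add: comm_def inv_mult_group m_assoc)
lemma comm_inv_left: "s \<in> carrier G \<Longrightarrow> u \<in> carrier G \<Longrightarrow>
  comm (inv s) u = inv s \<otimes> comm u s \<otimes> s"
  by (simp add: comm_def inv_mult_group m_assoc)
lemma centre_conj: "c \<in> centre G \<Longrightarrow> x \<in> carrier G \<Longrightarrow> x \<otimes> c \<otimes> inv x = c"
  unfolding centre_iff by (metis m_assoc inv_closed r_inv r_one)
lemma centre_conj': "c \<in> centre G \<Longrightarrow> x \<in> carrier G \<Longrightarrow> inv x \<otimes> c \<otimes> x = c"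
  using centre_conj[of c "inv x"] by simp
lemma centre_carrier: "c \<in> centre G \<Longrightarrow> c \<in> carrier G" by (simp add: centre_iff)

lemma comm_one[simp]: "u \<in> carrier G \<Longrightarrow> comm \<one> u = \<one>"
  by (simp add: comm_def)

lemma psi_comm_sub: "psi_comm G psi \<subseteq> carrier G"
  unfolding psi_comm_def by (rule generate_incl) auto

lemma S_lemma:
  assumes Q: QQ and a: "a \<in> psi_comm G psi"
  shows "a \<in> carrier G \<and> (\<forall>b\<in>carrier G. comm (psi a) (psi b) \<in> centre G)"
  using a unfolding psi_comm_def
proof (induction rule: generate.induct)
  case one
  then show ?case by (simp add: centre_one)
next
  case (incl h)
  then show ?case using Q by (auto simp: QQ_def)
next
  case (inv h)
  then obtain g where g: "g \<in> carrier G" and hg: "h = g \<otimes> inv (psi g)" by blast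
  show ?case
  proof (intro conjI ballI)
    show "inv h \<in> carrier G" using g hg by simp
    fix b assume b: "b \<in> carrier G"
    have c: "comm (psi h) (psi b) \<in> centre G" using Q g b hg by (auto simp: QQ_def)
    have "comm (psi (inv h)) (psi b) = inv (psi h) \<otimes> comm (psi b) (psi h) \<otimes> psi h"
      using g b hg by (simp add: comm_inv_left)
    also have "\<dots> = comm (psi b) (psi h)"
      using c g b hg by (intro centre_conj') (auto simp: comm_centre_sym)
    finally show "comm (psi (inv h)) (psi b) \<in> centre G"
      using c g b hg by (simp add: comm_centre_sym)
  qed
next
  case (eng h1 h2)
  show ?case
  proof (intro conjI ballI)
    show "h1 \<otimes> h2 \<in> carrier G" using eng by simp
    fix b assume b: "b \<in> carrier G"
    have c1: "comm (psi h1) (psi b) \<in> centre G" and c2: "comm (psi h2) (psi b) \<in> centre G"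
      using eng b by auto
    have "comm (psi (h1 \<otimes> h2)) (psi b) = psi h1 \<otimes> comm (psi h2) (psi b) \<otimes> inv (psi h1) \<otimes> comm (psi h1) (psi b)"
      using eng b by (simp add: comm_mult_left)
    also have "\<dots> = comm (psi h2) (psi b) \<otimes> comm (psi h1) (psi b)"
      using eng b c2 by (simp add: centre_conj)
    finally show "comm (psi (h1 \<otimes> h2)) (psi b) \<in> centre G"
      using c1 c2 centre_mult by simp
  qed
qed

lemma d_iff: "psi ` comm_subgroup G (psi_comm G psi) (carrier G) \<subseteq> centre G \<longleftrightarrow> QQ"
proof
  assume d: "psi ` comm_subgroup G (psi_comm G psi) (carrier G) \<subseteq> centre G"
  show QQ unfolding QQ_def
  proof (intro ballI)
    fix g h assume g: "g \<in> carrier G" and h: "h \<in> carrier G"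
    have t: "g \<otimes> inv (psi g) \<in> psi_comm G psi"
      unfolding psi_comm_def by (rule generate.incl) (use g in blast)
    have "comm (g \<otimes> inv (psi g)) h \<in> comm_subgroup G (psi_comm G psi) (carrier G)"
      unfolding comm_subgroup_def comm_def by (rule generate.incl) (use t h in blast)
    then have "psi (comm (g \<otimes> inv (psi g)) h) \<in> centre G" using d by blast
    then show "comm (psi (g \<otimes> inv (psi g))) (psi h) \<in> centre G"
      using g h by (simp add: comm_def)
  qed
next
  assume Q: QQ
  show "psi ` comm_subgroup G (psi_comm G psi) (carrier G) \<subseteq> centre G"
  proof
    fix y assume "y \<in> psi ` comm_subgroup G (psi_comm G psi) (carrier G)"
    then obtain x where x: "x \<in> comm_subgroup G (psi_comm G psi) (carrier G)" and y: "y = psi x"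
      by blast
    have "x \<in> carrier G \<and> psi x \<in> centre G"
      using x unfolding comm_subgroup_def
    proof (induction rule: generate.induct)
      case one
      then show ?case by (simp add: centre_one)
    next
      case (incl h)
      then obtain a b where ab: "a \<in> psi_comm G psi" "b \<in> carrier G"
        and h: "h = a \<otimes> b \<otimes> inv a \<otimes> inv b" by blast
      have "a \<in> carrier G \<and> (\<forall>b\<in>carrier G. comm (psi a) (psi b) \<in> centre G)"
        using S_lemma[OF Q ab(1)] .
      then show ?case using ab h by (simp add: comm_def)
    next
      case (inv h)
      then obtain a b where ab: "a \<in> psi_comm G psi" "b \<in> carrier G"
        and h: "h = a \<otimes> b \<otimes> inv a \<otimes> inv b" by blast
      have "a \<in> carrier G \<and> (\<forall>b\<in>carrier G. comm (psi a) (psi b) \<in> centre G)"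
        using S_lemma[OF Q ab(1)] .
      then show ?case using ab h centre_inv by (simp add: comm_def)
    next
      case (eng h1 h2)
      then show ?case using centre_mult by simp
    qed
    then show "y \<in> centre G" using y by simp
  qed
qed



abbreviation "BG \<equiv> BijGroup (carrier G)"

lemma BG_group: "group BG" by (rule group_BijGroup)

lemma restrict_Bij:
  assumes "\<And>x. x \<in> carrier G \<Longrightarrow> F x \<in> carrier G"
    and "\<And>x. x \<in> carrier G \<Longrightarrow> H x \<in> carrier G"
    and "\<And>x. x \<in> carrier G \<Longrightarrow> H (F x) = x"
    and "\<And>x. x \<in> carrier G \<Longrightarrow> F (H x) = x"
  shows "(\<lambda>x\<in>carrier G. F x) \<in> Bij (carrier G)"
proof -
  have "bij_betw (\<lambda>x\<in>carrier G. F x) (carrier G) (carrier G)"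
    by (rule bij_betwI[where g = H]) (use assms in auto)
  then show ?thesis by (simp add: Bij_def)
qed

lemma BG_carrier: "carrier BG = Bij (carrier G)" by (simp add: BijGroup_def)
lemma BG_one: "\<one>\<^bsub>BG\<^esub> = (\<lambda>x\<in>carrier G. x)" by (simp add: BijGroup_def)
lemma BG_mult: "f1 \<in> Bij (carrier G) \<Longrightarrow> f2 \<in> Bij (carrier G) \<Longrightarrow>
   f1 \<otimes>\<^bsub>BG\<^esub> f2 = (\<lambda>x\<in>carrier G. f1 (f2 x))"
  by (simp add: BijGroup_def compose_def)

lemma nu_eq: "nu G psi g = (\<lambda>h\<in>carrier G. circ g h)"
  by (simp add: nu_def circ_def)
lemma lreg_eq: "lreg G g = (\<lambda>h\<in>carrier G. g \<otimes> h)"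
  by (simp add: lreg_def)

lemma nu_Bij: "g \<in> carrier G \<Longrightarrow> nu G psi g \<in> Bij (carrier G)"
  unfolding nu_eq
  by (rule restrict_Bij[where H = "\<lambda>y. psi g \<otimes> inv g \<otimes> y \<otimes> inv (psi g)"])
     (auto simp: circ_def m_assoc)

lemma lreg_Bij: "g \<in> carrier G \<Longrightarrow> lreg G g \<in> Bij (carrier G)"
  unfolding lreg_eq
  by (rule restrict_Bij[where H = "\<lambda>y. inv g \<otimes> y"]) (auto simp: m_assoc)

lemma circ_one_right[simp]: "g \<in> carrier G \<Longrightarrow> circ g \<one> = g"
  by (simp add: circ_def m_assoc)
lemma circ_one_left[simp]: "g \<in> carrier G \<Longrightarrow> circ \<one> g = g"
  by (simp add: circ_def)

lemma nu_apply: "g \<in> carrier G \<Longrightarrow> h \<in> carrier G \<Longrightarrow> nu G psi g h = circ g h"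
  by (simp add: nu_eq)

lemma nu_mult: "g \<in> carrier G \<Longrightarrow> h \<in> carrier G \<Longrightarrow>
  nu G psi g \<otimes>\<^bsub>BG\<^esub> nu G psi h = (\<lambda>x\<in>carrier G. circ g (circ h x))"
  by (simp only: BG_mult[OF nu_Bij nu_Bij]) (intro restrict_ext, simp add: nu_apply)

lemma nu_one: "nu G psi \<one> = \<one>\<^bsub>BG\<^esub>"
  by (simp add: nu_eq BG_one cong: restrict_cong)

lemma lreg_mult: "g \<in> carrier G \<Longrightarrow> h \<in> carrier G \<Longrightarrow>
  lreg G g \<otimes>\<^bsub>BG\<^esub> lreg G h = lreg G (g \<otimes> h)"
  by (simp only: BG_mult[OF lreg_Bij lreg_Bij]) (simp add: lreg_eq m_assoc cong: restrict_cong)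

lemma lreg_inv: "g \<in> carrier G \<Longrightarrow> inv\<^bsub>BG\<^esub> (lreg G g) = lreg G (inv g)"
  apply (rule group.inv_equality[OF BG_group])
    apply (simp add: lreg_mult)
    apply (simp add: lreg_eq BG_one cong: restrict_cong)
  by (simp_all add: BG_carrier lreg_Bij)

lemma restrict_eqD: "(\<lambda>x\<in>carrier G. F x) = (\<lambda>x\<in>carrier G. H x) \<Longrightarrow> x \<in> carrier G \<Longrightarrow> F x = H x"
  by (metis restrict_apply')

definition rinv where "rinv g = psi g \<otimes> inv g \<otimes> inv (psi g)"
lemma rinv_closed[simp]: "g \<in> carrier G \<Longrightarrow> rinv g \<in> carrier G" by (simp add: rinv_def)
lemma circ_rinv: "g \<in> carrier G \<Longrightarrow> circ g (rinv g) = \<one>"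
  by (simp add: circ_def rinv_def m_assoc)
lemma rinv_circ:
  assumes Q: QQ and g: "g \<in> carrier G"
  shows "circ (rinv g) g = \<one>"
proof -
  let ?k = "rinv g" let ?k' = "rinv (rinv g)"
  have "circ ?k g = circ (circ ?k g) (circ ?k ?k')" using g by (simp add: circ_rinv)
  also have "\<dots> = circ ?k (circ g (circ ?k ?k'))" using g Q by (simp add: circ_assoc_QQ)
  also have "\<dots> = circ ?k (circ (circ g ?k) ?k')" using g Q by (simp add: circ_assoc_QQ)
  also have "\<dots> = \<one>" using g by (simp add: circ_rinv)
  finally show ?thesis .
qed

lemma BG_canc: "a \<in> carrier BG \<Longrightarrow> c \<in> carrier BG \<Longrightarrow>
   a \<otimes>\<^bsub>BG\<^esub> (inv\<^bsub>BG\<^esub> a \<otimes>\<^bsub>BG\<^esub> c) = c"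
  using group.inv_solve_left[OF BG_group, of "inv\<^bsub>BG\<^esub> a \<otimes>\<^bsub>BG\<^esub> c" a c]
  by (simp add: group.inv_closed[OF BG_group] monoid.m_closed[OF group.is_monoid[OF BG_group]])

lemma a_iff: "subgroup (nu G psi ` carrier G) BG \<longleftrightarrow> QQ"
proof
  assume sg: "subgroup (nu G psi ` carrier G) BG"
  have "\<forall>g\<in>carrier G. \<forall>h\<in>carrier G. \<forall>x\<in>carrier G. circ (circ g h) x = circ g (circ h x)"
  proof (intro ballI)
    fix g h x assume g: "g \<in> carrier G" and h: "h \<in> carrier G" and x: "x \<in> carrier G"
    have "nu G psi g \<otimes>\<^bsub>BG\<^esub> nu G psi h \<in> nu G psi ` carrier G"
      using g h by (intro subgroup.m_closed[OF sg]) auto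
    then obtain k where k: "k \<in> carrier G"
      and e0: "nu G psi g \<otimes>\<^bsub>BG\<^esub> nu G psi h = nu G psi k" by auto
    have e: "(\<lambda>x\<in>carrier G. circ g (circ h x)) = (\<lambda>x\<in>carrier G. circ k x)"
      using e0 g h by (simp only: nu_mult) (simp add: nu_eq)
    have "circ g (circ h \<one>) = circ k \<one>" using restrict_eqD[OF e] by simp
    then have kk: "k = circ g h" using g h k by simp
    show "circ (circ g h) x = circ g (circ h x)" using restrict_eqD[OF e x] kk by simp
  qed
  then show QQ using assoc_iff_QQ by simp
next
  assume Q: QQ
  show "subgroup (nu G psi ` carrier G) BG"
  proof (rule group.subgroupI[OF BG_group])
    show "nu G psi ` carrier G \<subseteq> carrier BG" using nu_Bij by (auto simp: BG_carrier)
    show "nu G psi ` carrier G \<noteq> {}" by auto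
  next
    fix a assume "a \<in> nu G psi ` carrier G"
    then obtain g where g: "g \<in> carrier G" and a: "a = nu G psi g" by blast
    have "nu G psi (rinv g) \<otimes>\<^bsub>BG\<^esub> nu G psi g = \<one>\<^bsub>BG\<^esub>"
      using g Q by (simp add: nu_mult circ_assoc_QQ[symmetric] rinv_circ BG_one cong: restrict_cong)
    then have "inv\<^bsub>BG\<^esub> a = nu G psi (rinv g)"
      using a g by (intro group.inv_equality[OF BG_group]) (auto simp: BG_carrier nu_Bij)
    then show "inv\<^bsub>BG\<^esub> a \<in> nu G psi ` carrier G" using g by auto
  next
    fix a b assume "a \<in> nu G psi ` carrier G" "b \<in> nu G psi ` carrier G"
    then obtain g h where g: "g \<in> carrier G" and h: "h \<in> carrier G"
      and ab: "a = nu G psi g" "b = nu G psi h" by blast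
    have "a \<otimes>\<^bsub>BG\<^esub> b = nu G psi (circ g h)"
      unfolding ab nu_mult[OF g h] using g h Q by (simp add: nu_eq circ_assoc_QQ cong: restrict_cong)
    then show "a \<otimes>\<^bsub>BG\<^esub> b \<in> nu G psi ` carrier G" using g h by auto
  qed
qed


lemma conj_lreg_nu:
  assumes x: "x \<in> carrier G" and g: "g \<in> carrier G"
  shows "lreg G x \<otimes>\<^bsub>BG\<^esub> nu G psi g \<otimes>\<^bsub>BG\<^esub> inv\<^bsub>BG\<^esub> (lreg G x)
        = (\<lambda>h\<in>carrier G. x \<otimes> circ g (inv x \<otimes> h))"
proof -
  have 1: "lreg G x \<otimes>\<^bsub>BG\<^esub> nu G psi g = (\<lambda>h\<in>carrier G. x \<otimes> circ g h)"
    using x g by (simp only: BG_mult[OF lreg_Bij nu_Bij]) (simp add: lreg_eq nu_eq cong: restrict_cong)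
  have 2: "lreg G x \<otimes>\<^bsub>BG\<^esub> nu G psi g \<in> Bij (carrier G)"
    using x g monoid.m_closed[OF group.is_monoid[OF BG_group]] by (simp add: BG_carrier lreg_Bij nu_Bij)
  have "lreg G x \<otimes>\<^bsub>BG\<^esub> nu G psi g \<otimes>\<^bsub>BG\<^esub> lreg G (inv x) =
     (\<lambda>i\<in>carrier G. (lreg G x \<otimes>\<^bsub>BG\<^esub> nu G psi g) (lreg G (inv x) i))"
    by (rule BG_mult[OF 2 lreg_Bij[OF inv_closed[OF x]]])
  also have "\<dots> = (\<lambda>h\<in>carrier G. x \<otimes> circ g (inv x \<otimes> h))"
    unfolding 1 using x by (simp add: lreg_eq cong: restrict_cong)
  finally show ?thesis unfolding lreg_inv[OF x] .
qed

lemma conjnu_iff: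
  assumes x: "x \<in> carrier G" and g: "g \<in> carrier G"
  shows "(\<forall>h\<in>carrier G. x \<otimes> circ g (inv x \<otimes> h) = circ (x \<otimes> circ g (inv x)) h)
     \<longleftrightarrow> comm (psi (g \<otimes> inv (psi g))) (psi x) \<in> centre G"
proof -
  define k where "k = x \<otimes> circ g (inv x)"
  have k: "k \<in> carrier G" using x g by (simp add: k_def)
  have L: "x \<otimes> circ g (inv x \<otimes> h) = k \<otimes> (inv (psi g) \<otimes> h \<otimes> psi g)" if "h \<in> carrier G" for h
    using x g that by (simp add: k_def circ_def m_assoc)
  have R: "circ k h = k \<otimes> (inv (psi k) \<otimes> h \<otimes> psi k)" if "h \<in> carrier G" for h
    using k that by (simp add: circ_def m_assoc)
  have "(\<forall>h\<in>carrier G. x \<otimes> circ g (inv x \<otimes> h) = circ k h)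
      \<longleftrightarrow> (\<forall>h\<in>carrier G. inv (psi g) \<otimes> h \<otimes> psi g = inv (psi k) \<otimes> h \<otimes> psi k)"
    using L R k g by simp
  also have "\<dots> \<longleftrightarrow> psi k \<otimes> inv (psi g) \<in> centre G"
    using k g by (intro conj_iff) auto
  also have "psi k \<otimes> inv (psi g) = comm (psi x) (psi (g \<otimes> inv (psi g)))"
    using x g by (simp add: k_def circ_def comm_def inv_mult_group m_assoc)
  finally show ?thesis using x g comm_centre_sym unfolding k_def by simp
qed

lemma b_iff: "normalised_by_lreg G (nu G psi ` carrier G) \<longleftrightarrow> QQ"
proof
  assume nb: "normalised_by_lreg G (nu G psi ` carrier G)"
  show QQ unfolding QQ_def
  proof (intro ballI)
    fix g x assume g: "g \<in> carrier G" and x: "x \<in> carrier G"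
    have "lreg G x \<otimes>\<^bsub>BG\<^esub> nu G psi g \<otimes>\<^bsub>BG\<^esub> inv\<^bsub>BG\<^esub> (lreg G x) \<in> nu G psi ` carrier G"
      using nb x g unfolding normalised_by_lreg_def by blast
    then obtain k where k: "k \<in> carrier G" and
      e0: "lreg G x \<otimes>\<^bsub>BG\<^esub> nu G psi g \<otimes>\<^bsub>BG\<^esub> inv\<^bsub>BG\<^esub> (lreg G x) = nu G psi k" by auto
    have e: "(\<lambda>h\<in>carrier G. x \<otimes> circ g (inv x \<otimes> h)) = (\<lambda>h\<in>carrier G. circ k h)"
    proof -
      have "(\<lambda>h\<in>carrier G. x \<otimes> circ g (inv x \<otimes> h)) = nu G psi k"
        using e0 by (simp only: conj_lreg_nu[OF x g])
      then show ?thesis by (simp only: nu_eq)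
    qed
    have "x \<otimes> circ g (inv x \<otimes> \<one>) = circ k \<one>" using restrict_eqD[OF e] by simp
    then have kk: "k = x \<otimes> circ g (inv x)" using x g k by simp
    have "\<forall>h\<in>carrier G. x \<otimes> circ g (inv x \<otimes> h) = circ (x \<otimes> circ g (inv x)) h"
      using restrict_eqD[OF e] kk by simp
    then show "comm (psi (g \<otimes> inv (psi g))) (psi x) \<in> centre G"
      using conjnu_iff[OF x g] by simp
  qed
next
  assume Q: QQ
  have sub: "lreg G x \<otimes>\<^bsub>BG\<^esub> nu G psi g \<otimes>\<^bsub>BG\<^esub> inv\<^bsub>BG\<^esub> (lreg G x)
     = nu G psi (x \<otimes> circ g (inv x))" if x: "x \<in> carrier G" and g: "g \<in> carrier G" for x g
  proof -
    have "\<forall>h\<in>carrier G. x \<otimes> circ g (inv x \<otimes> h) = circ (x \<otimes> circ g (inv x)) h"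
      using conjnu_iff[OF x g] Q x g by (simp add: QQ_def)
    then have "(\<lambda>h\<in>carrier G. x \<otimes> circ g (inv x \<otimes> h)) = nu G psi (x \<otimes> circ g (inv x))"
      unfolding nu_eq by (intro restrict_ext) simp
    then show ?thesis by (simp only: conj_lreg_nu[OF x g])
  qed
  show "normalised_by_lreg G (nu G psi ` carrier G)"
    unfolding normalised_by_lreg_def
  proof (intro ballI equalityI subsetI)
    fix x y assume x: "x \<in> carrier G"
      and y: "y \<in> (\<lambda>a. lreg G x \<otimes>\<^bsub>BG\<^esub> a \<otimes>\<^bsub>BG\<^esub> inv\<^bsub>BG\<^esub> (lreg G x)) ` nu G psi ` carrier G"
    then show "y \<in> nu G psi ` carrier G" using sub by auto
  next
    fix x y assume x: "x \<in> carrier G" and y: "y \<in> nu G psi ` carrier G"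
    then obtain g where g: "g \<in> carrier G" and yg: "y = nu G psi g" by blast
    define y' where "y' = lreg G (inv x) \<otimes>\<^bsub>BG\<^esub> y \<otimes>\<^bsub>BG\<^esub> inv\<^bsub>BG\<^esub> (lreg G (inv x))"
    have y'N: "y' \<in> nu G psi ` carrier G"
      using sub[of "inv x" g] x g unfolding y'_def yg by auto
    have yB: "y \<in> carrier BG" using yg g by (simp add: BG_carrier nu_Bij)
    have lB: "lreg G x \<in> carrier BG" using x by (simp add: BG_carrier lreg_Bij)
    have li: "lreg G (inv x) = inv\<^bsub>BG\<^esub> (lreg G x)" using lreg_inv[OF x] by simp
    have "lreg G x \<otimes>\<^bsub>BG\<^esub> y' \<otimes>\<^bsub>BG\<^esub> inv\<^bsub>BG\<^esub> (lreg G x) = y"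
      unfolding y'_def li using yB lB BG_group
      by (simp add: group.inv_inv group.inv_closed monoid.m_assoc group.is_monoid group.r_inv
          group.l_inv monoid.m_closed monoid.l_one BG_canc monoid.r_one)
    then show "y \<in> (\<lambda>a. lreg G x \<otimes>\<^bsub>BG\<^esub> a \<otimes>\<^bsub>BG\<^esub> inv\<^bsub>BG\<^esub> (lreg G x)) ` nu G psi ` carrier G"
      using y'N by force
  qed
qed

lemma regular: "regular_perm G (nu G psi ` carrier G)"
  unfolding regular_perm_def bij_betw_def
proof
  show "inj_on (\<lambda>\<eta>. \<eta> \<one>) (nu G psi ` carrier G)"
    by (auto simp: inj_on_def nu_apply)
  show "(\<lambda>\<eta>. \<eta> \<one>) ` nu G psi ` carrier G = carrier G"
    by (simp add: image_image nu_apply)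
qed


definition Y where "Y g z = g \<otimes> inv (psi g) \<otimes> z \<otimes> psi g \<otimes> inv g"

lemma Y_closed[simp]: "g \<in> carrier G \<Longrightarrow> z \<in> carrier G \<Longrightarrow> Y g z \<in> carrier G"
  by (simp add: Y_def)

lemma nu_lreg_conj:
  assumes g: "g \<in> carrier G" and z: "z \<in> carrier G"
  shows "nu G psi g \<otimes>\<^bsub>BG\<^esub> lreg G z \<otimes>\<^bsub>BG\<^esub> inv\<^bsub>BG\<^esub> (nu G psi g) = lreg G (Y g z)"
proof -
  have e1: "nu G psi g \<otimes>\<^bsub>BG\<^esub> lreg G z = (\<lambda>h\<in>carrier G. circ g (z \<otimes> h))"
    by (rule trans[OF BG_mult[OF nu_Bij[OF g] lreg_Bij[OF z]]])
       (use g z in \<open>simp add: lreg_eq nu_eq cong: restrict_cong\<close>)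
  have e2: "lreg G (Y g z) \<otimes>\<^bsub>BG\<^esub> nu G psi g = (\<lambda>h\<in>carrier G. Y g z \<otimes> circ g h)"
    by (rule trans[OF BG_mult[OF lreg_Bij[OF Y_closed[OF g z]] nu_Bij[OF g]]])
       (use g z in \<open>simp add: lreg_eq nu_eq cong: restrict_cong\<close>)
  have "(\<lambda>h\<in>carrier G. circ g (z \<otimes> h)) = (\<lambda>h\<in>carrier G. Y g z \<otimes> circ g h)"
    using g z by (intro restrict_ext) (simp add: Y_def circ_def m_assoc)
  then have eq: "nu G psi g \<otimes>\<^bsub>BG\<^esub> lreg G z = lreg G (Y g z) \<otimes>\<^bsub>BG\<^esub> nu G psi g"
    using e1 e2 by simp
  have aB: "nu G psi g \<in> carrier BG" using g by (simp add: BG_carrier nu_Bij)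
  have cB: "lreg G (Y g z) \<in> carrier BG" using g z by (simp add: BG_carrier lreg_Bij)
  show ?thesis unfolding eq using aB cB BG_group
    by (simp add: group.inv_closed monoid.m_assoc group.is_monoid group.r_inv monoid.r_one)
qed

lemma normalises: "normalises_lreg G (nu G psi ` carrier G)"
  unfolding normalises_lreg_def
proof (intro ballI equalityI subsetI)
  fix \<eta> y assume "\<eta> \<in> nu G psi ` carrier G"
    and y: "y \<in> (\<lambda>x. \<eta> \<otimes>\<^bsub>BG\<^esub> x \<otimes>\<^bsub>BG\<^esub> inv\<^bsub>BG\<^esub> \<eta>) ` lreg G ` carrier G"
  then show "y \<in> lreg G ` carrier G" using nu_lreg_conj by auto
next
  fix \<eta> y assume "\<eta> \<in> nu G psi ` carrier G" and y: "y \<in> lreg G ` carrier G"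
  then obtain g w where g: "g \<in> carrier G" and w: "w \<in> carrier G"
    and eta: "\<eta> = nu G psi g" and yw: "y = lreg G w" by blast
  define z where "z = psi g \<otimes> inv g \<otimes> w \<otimes> g \<otimes> inv (psi g)"
  have z: "z \<in> carrier G" using g w by (simp add: z_def)
  have "Y g z = w" using g w by (simp add: z_def Y_def m_assoc)
  then have "y = \<eta> \<otimes>\<^bsub>BG\<^esub> lreg G z \<otimes>\<^bsub>BG\<^esub> inv\<^bsub>BG\<^esub> \<eta>"
    using nu_lreg_conj[OF g z] eta yw by simp
  then show "y \<in> (\<lambda>x. \<eta> \<otimes>\<^bsub>BG\<^esub> x \<otimes>\<^bsub>BG\<^esub> inv\<^bsub>BG\<^esub> \<eta>) ` lreg G ` carrier G"
    using z by blast
qed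

abbreviation "CS e \<equiv> circ_struct G psi e"

lemma CS_simps[simp]: "carrier (CS e) = carrier G" "\<one>\<^bsub>CS e\<^esub> = e"
  "g \<otimes>\<^bsub>CS e\<^esub> h = circ g h"
  by (simp_all add: circ_struct_def circ_def)

lemma gam_one[simp]: "x \<in> carrier G \<Longrightarrow> gam \<one> x = x" by (simp add: gam_def)
lemma gam_prod: "g \<in> carrier G \<Longrightarrow> h \<in> carrier G \<Longrightarrow> x \<in> carrier G \<Longrightarrow>
   gam (g \<otimes> h) x = gam h (gam g x)"
  by (simp add: gam_def inv_mult_group m_assoc)

lemma e_iff: "(\<exists>e. bi_skew_brace G (CS e)) \<longleftrightarrow> QQ"
proof
  assume "\<exists>e. bi_skew_brace G (CS e)"
  then obtain e where "group (CS e)" by (auto simp: bi_skew_brace_def skew_brace_def)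
  then have "monoid (CS e)" by (rule group.is_monoid)
  then have "\<forall>g\<in>carrier G. \<forall>h\<in>carrier G. \<forall>x\<in>carrier G. circ (circ g h) x = circ g (circ h x)"
    using monoid.m_assoc[of "CS e"] by simp
  then show QQ using assoc_iff_QQ by simp
next
  assume Q: QQ
  have gC: "group (CS \<one>)"
  proof (rule groupI)
    fix x assume x: "x \<in> carrier (CS \<one>)"
    then show "\<exists>y\<in>carrier (CS \<one>). y \<otimes>\<^bsub>CS \<one>\<^esub> x = \<one>\<^bsub>CS \<one>\<^esub>"
      using rinv_circ[OF Q] by (intro bexI[of _ "rinv x"]) auto
  qed (auto simp: circ_assoc_QQ[OF Q])
  have invC: "inv\<^bsub>CS \<one>\<^esub> g = rinv g" if g: "g \<in> carrier G" for g
    using g rinv_circ[OF Q g] by (intro group.inv_equality[OF gC]) auto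
  have sb1: "skew_brace G (CS \<one>)"
    unfolding skew_brace_def using gC is_group
    by (auto simp: circ_def m_assoc)
  have key: "g \<otimes> circ h k = circ (circ (g \<otimes> h) (rinv g)) (g \<otimes> k)"
    if g: "g \<in> carrier G" and h: "h \<in> carrier G" and k: "k \<in> carrier G" for g h k
  proof -
    let ?r = "rinv g"
    have gr: "gam g ?r = inv g"
    proof -
      have "g \<otimes> gam g ?r = \<one>" using g circ_rinv[OF g] by (simp add: circ_gam)
      then have "inv g \<otimes> (g \<otimes> gam g ?r) = inv g" using g by simp
      then show ?thesis using g by simp
    qed
    have "gam g (circ ?r (g \<otimes> k)) = gam g ?r \<otimes> gam g (gam ?r (g \<otimes> k))"
      using g k by (simp add: circ_gam gam_mult)
    also have "gam g (gam ?r (g \<otimes> k)) = gam (circ g ?r) (g \<otimes> k)"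
      using gam_hom_QQ[OF Q, of g ?r "g \<otimes> k"] g k by simp
    also have "\<dots> = g \<otimes> k" using g k by (simp add: circ_rinv)
    finally have A: "gam g (circ ?r (g \<otimes> k)) = k" using gr g k by simp
    have "circ (circ (g \<otimes> h) ?r) (g \<otimes> k) = circ (g \<otimes> h) (circ ?r (g \<otimes> k))"
      using g h k circ_assoc_QQ[OF Q] by simp
    also have "\<dots> = g \<otimes> h \<otimes> gam h (gam g (circ ?r (g \<otimes> k)))"
      using g h k by (simp add: circ_gam gam_prod)
    also have "\<dots> = g \<otimes> circ h k" using A g h k by (simp add: circ_gam m_assoc)
    finally show ?thesis by simp
  qed
  have sb2: "skew_brace (CS \<one>) G"
    unfolding skew_brace_def using gC is_group
    by (auto simp: invC key)
  show "\<exists>e. bi_skew_brace G (CS e)"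
    using sb1 sb2 by (auto simp: bi_skew_brace_def)
qed

end

theorem theorem1p1:
  fixes G :: "'a monoid" and \<psi> :: "'a \<Rightarrow> 'a"
  assumes "group G" and "\<psi> \<in> hom G G"
  defines "N \<equiv> nu G \<psi> ` carrier G"
  shows
    "(subgroup N (BijGroup (carrier G)) \<longleftrightarrow> normalised_by_lreg G N)
   \<and> (normalised_by_lreg G N \<longleftrightarrow>
        (subgroup N (BijGroup (carrier G)) \<and> regular_perm G N
         \<and> normalises_lreg G N \<and> normalised_by_lreg G N))
   \<and> ((subgroup N (BijGroup (carrier G)) \<and> regular_perm G N
         \<and> normalises_lreg G N \<and> normalised_by_lreg G N) \<longleftrightarrow>
        \<psi> ` comm_subgroup G (psi_comm G \<psi>) (carrier G) \<subseteq> centre G)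
   \<and> (\<psi> ` comm_subgroup G (psi_comm G \<psi>) (carrier G) \<subseteq> centre G \<longleftrightarrow>
        (\<exists>e. bi_skew_brace G (circ_struct G \<psi> e)))"
proof -
  interpret P: psig G \<psi> using assms by (simp add: psig_def psig_axioms_def)
  show ?thesis unfolding N_def
    using P.a_iff P.b_iff P.d_iff P.e_iff P.regular P.normalises by blast
qed

end
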